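(* Let $\Omega\subset\mathbb{R}^2$ be a bounded domain and $u,v\in C^{2}(\Omega)\cap C^0(\bar\Omega)$. For $w\in\{u,v\}$ let $S(w)=\{(x,y)\in\Omega:w_x-y=0,\ w_y+x=0\}$ and $N(w)=(w_x-y,w_y+x)/\sqrt{(w_x-y)^2+(w_y+x)^2}$ on $\Omega\setminus S(w)$. Suppose $N(u)=N(v)$ in $\Omega\setminus(S(u)\cup S(v))$ and $u=v$ on $\partial\Omega$. Then $u=v$ in $\Omega$. *)

theory Defs
  imports "HOL-Analysis.Analysis"
begin

definition px :: "(real \<times> real \<Rightarrow> real) \<Rightarrow> real \<times> real \<Rightarrow> real" where
  "px f p = deriv (\<lambda>t. f (t, snd p)) (fst p)"

definition py :: "(real \<times> real \<Rightarrow> real) \<Rightarrow> real \<times> real \<Rightarrow> real" where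
  "py f p = deriv (\<lambda>t. f (fst p, t)) (snd p)"

definition C1_on :: "(real \<times> real) set \<Rightarrow> (real \<times> real \<Rightarrow> real) \<Rightarrow> bool" where
  "C1_on S f \<longleftrightarrow>
     (\<forall>p\<in>S. (\<lambda>t. f (t, snd p)) differentiable (at (fst p)) \<and>
             (\<lambda>t. f (fst p, t)) differentiable (at (snd p))) \<and>
     continuous_on S (px f) \<and> continuous_on S (py f)"

definition C2_on :: "(real \<times> real) set \<Rightarrow> (real \<times> real \<Rightarrow> real) \<Rightarrow> bool" where
  "C2_on S f \<longleftrightarrow> C1_on S f \<and> C1_on S (px f) \<and> C1_on S (py f)"

definition sing_set :: "(real \<times> real) set \<Rightarrow> (real \<times> real \<Rightarrow> real) \<Rightarrow> (real \<times> real) set" where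
  "sing_set \<Omega> w = {p \<in> \<Omega>. px w p - snd p = 0 \<and> py w p + fst p = 0}"

definition Nfield :: "(real \<times> real \<Rightarrow> real) \<Rightarrow> real \<times> real \<Rightarrow> real \<times> real" where
  "Nfield w p = (let a = px w p - snd p; b = py w p + fst p; r = sqrt (a^2 + b^2)
                 in (a / r, b / r))"

end

theory Submission
  imports Defs
begin


lemma ftc_real:
  fixes f f' :: "real \<Rightarrow> real"
  assumes "a \<le> b" "\<And>t. t \<in> {a..b} \<Longrightarrow> (f has_real_derivative f' t) (at t)"
  shows "(f' has_integral (f b - f a)) {a..b}"
  using assms(1)
proof (rule fundamental_theorem_of_calculus)
  fix t assume "t \<in> {a..b}"
  then show "(f has_vector_derivative f' t) (at t within {a..b})"
    using assms(2) by (simp add: has_real_derivative_iff_has_vector_derivative has_vector_derivative_at_within)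
qed

lemma int_dx_zero:
  fixes f g :: "real \<times> real \<Rightarrow> real"
  assumes cont: "continuous_on (cbox (a1,a2) (b1,b2)) g" and "a1 \<le> b1"
    and der: "\<And>x y. x \<in> {a1..b1} \<Longrightarrow> y \<in> {a2..b2} \<Longrightarrow> ((\<lambda>t. f (t,y)) has_real_derivative g (x,y)) (at x)"
    and bd: "\<And>y. y \<in> {a2..b2} \<Longrightarrow> f (a1,y) = f (b1,y)"
  shows "integral (cbox (a1,a2) (b1,b2)) g = 0"
proof -
  have c2: "continuous_on (cbox (a1,a2) (b1,b2)) (\<lambda>(x,y). g (x,y))" using cont by simp
  have "integral (cbox (a1,a2) (b1,b2)) g = integral (cbox a1 b1) (\<lambda>x. integral (cbox a2 b2) (\<lambda>y. g (x, y)))"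
    by (rule integral_prod_continuous[OF cont])
  also have "\<dots> = integral (cbox a2 b2) (\<lambda>y. integral (cbox a1 b1) (\<lambda>x. g (x,y)))"
    using integral_swap_continuous[of a1 a2 b1 b2 "\<lambda>x y. g (x,y)"] c2 by simp
  also have "\<dots> = integral (cbox a2 b2) (\<lambda>y. 0)"
  proof (rule integral_cong)
    fix y assume y: "y \<in> cbox a2 b2"
    have "((\<lambda>x. g (x,y)) has_integral (f (b1,y) - f (a1,y))) {a1..b1}"
      by (rule ftc_real[OF \<open>a1 \<le> b1\<close>, of "\<lambda>t. f (t,y)"]) (use der y in auto)
    then show "integral (cbox a1 b1) (\<lambda>x. g (x,y)) = 0" using bd[of y] y by (simp add: integral_unique)
  qed
  finally show ?thesis by simp
qed

lemma int_dy_zero: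
  fixes f g :: "real \<times> real \<Rightarrow> real"
  assumes cont: "continuous_on (cbox (a1,a2) (b1,b2)) g" and "a2 \<le> b2"
    and der: "\<And>x y. x \<in> {a1..b1} \<Longrightarrow> y \<in> {a2..b2} \<Longrightarrow> ((\<lambda>t. f (x,t)) has_real_derivative g (x,y)) (at y)"
    and bd: "\<And>x. x \<in> {a1..b1} \<Longrightarrow> f (x,a2) = f (x,b2)"
  shows "integral (cbox (a1,a2) (b1,b2)) g = 0"
proof -
  have "integral (cbox (a1,a2) (b1,b2)) g = integral (cbox a1 b1) (\<lambda>x. integral (cbox a2 b2) (\<lambda>y. g (x, y)))"
    by (rule integral_prod_continuous[OF cont])
  also have "\<dots> = integral (cbox a1 b1) (\<lambda>x. 0)"
  proof (rule integral_cong)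
    fix x assume x: "x \<in> cbox a1 b1"
    have "((\<lambda>y. g (x,y)) has_integral (f (x,b2) - f (x,a2))) {a2..b2}"
      by (rule ftc_real[OF \<open>a2 \<le> b2\<close>, of "\<lambda>t. f (x,t)"]) (use der x in auto)
    then show "integral (cbox a2 b2) (\<lambda>y. g (x,y)) = 0" using bd[of x] x by (simp add: integral_unique)
  qed
  finally show ?thesis by simp
qed

lemma C1_dx:
  assumes "C1_on S f" "(x,y) \<in> S"
  shows "((\<lambda>t. f (t,y)) has_real_derivative px f (x,y)) (at x)"
  using assms unfolding C1_on_def px_def
  by (metis DERIV_deriv_iff_real_differentiable fst_conv snd_conv)

lemma C1_dy:
  assumes "C1_on S f" "(x,y) \<in> S"
  shows "((\<lambda>t. f (x,t)) has_real_derivative py f (x,y)) (at y)"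
  using assms unfolding C1_on_def py_def
  by (metis DERIV_deriv_iff_real_differentiable fst_conv snd_conv)

lemma H_deriv:
  fixes c x :: real
  shows "((\<lambda>t. (max (t - c) 0)^2) has_real_derivative 2 * max (x - c) 0) (at x)"
proof (cases "x = c")
  case True
  have "\<forall>z. (max (z - c) 0)^2 - (max (x - c) 0)^2 = max (z - c) 0 * (z - x)"
    using True by (auto simp: max_def power2_eq_square)
  moreover have "isCont (\<lambda>z. max (z - c) 0) x" by (intro continuous_intros)
  ultimately show ?thesis using True
    by (subst CARAT_DERIV) (rule exI[of _ "\<lambda>z. max (z - c) 0"], simp)
next
  case False
  show ?thesis
  proof (cases "x < c")
    case True
    have "((\<lambda>t. 0::real) has_real_derivative 2 * max (x - c) 0) (at x)" using True by simp
    then show ?thesis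
      by (rule has_field_derivative_transform_within_open[where S="{..<c}"]) (use True in auto)
  next
    case F2: False
    with False have xc: "x > c" by simp
    have "((\<lambda>t. (t - c)^2) has_real_derivative 2 * max (x - c) 0) (at x)"
      using xc by (auto intro!: derivative_eq_intros)
    then show ?thesis
      by (rule has_field_derivative_transform_within_open[where S="{c<..}"]) (use xc in auto)
  qed
qed


definition extz :: "(real \<times> real) set \<Rightarrow> (real \<times> real \<Rightarrow> real) \<Rightarrow> real \<times> real \<Rightarrow> real" where
  "extz S f p = (if p \<in> S then f p else 0)"

lemma isCont_local:
  assumes "open T" "p \<in> T" "\<And>q. q \<in> T \<Longrightarrow> f q = g q" "isCont g p"
  shows "isCont f p"
proof -
  have "eventually (\<lambda>q. f q = g q) (nhds p)"
    using assms(1-3) eventually_nhds by blast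
  then show ?thesis using isCont_cong assms(4) by blast
qed

lemma extz_cont:
  assumes "open \<Omega>" "closed K" "K \<subseteq> \<Omega>" "continuous_on \<Omega> f" "\<And>q. q \<in> \<Omega> - K \<Longrightarrow> f q = 0"
  shows "isCont (extz \<Omega> f) p"
proof (cases "p \<in> \<Omega>")
  case True
  have c: "isCont f p" using assms(1,4) True continuous_on_eq_continuous_at by blast
  show ?thesis
    by (rule isCont_local[OF assms(1) True _ c]) (simp add: extz_def)
next
  case False
  have c: "isCont (\<lambda>q. 0::real) p" by simp
  show ?thesis
    by (rule isCont_local[where T="- K", OF _ _ _ c]) (use assms False in \<open>auto simp: extz_def\<close>)
qed

lemma extz_cont_on:
  assumes "open \<Omega>" "closed K" "K \<subseteq> \<Omega>" "continuous_on \<Omega> f" "\<And>q. q \<in> \<Omega> - K \<Longrightarrow> f q = 0"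
  shows "continuous_on A (extz \<Omega> f)"
  using extz_cont[OF assms] by (simp add: continuous_at_imp_continuous_on)

lemma open_slice_x: "open (T :: (real \<times> real) set) \<Longrightarrow> open {t. (t, y) \<in> T}"
proof -
  assume "open T"
  then have "open ((\<lambda>t::real. (t, y)) -` T)" by (rule continuous_open_vimage) (intro continuous_intros)
  then show ?thesis by (simp add: vimage_def)
qed

lemma open_slice_y: "open (T :: (real \<times> real) set) \<Longrightarrow> open {t. (x, t) \<in> T}"
proof -
  assume "open T"
  then have "open ((\<lambda>t::real. (x, t)) -` T)" by (rule continuous_open_vimage) (intro continuous_intros)
  then show ?thesis by (simp add: vimage_def)
qed

lemma extz_dx:
  assumes "open \<Omega>" "closed K" "K \<subseteq> \<Omega>" "\<And>q. q \<in> \<Omega> - K \<Longrightarrow> f q = 0" "\<And>q. q \<in> \<Omega> - K \<Longrightarrow> fx q = 0"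
    and d: "\<And>x y. (x,y) \<in> \<Omega> \<Longrightarrow> ((\<lambda>t. f (t,y)) has_real_derivative fx (x,y)) (at x)"
  shows "((\<lambda>t. extz \<Omega> f (t,y)) has_real_derivative extz \<Omega> fx (x,y)) (at x)"
proof (cases "(x,y) \<in> \<Omega>")
  case True
  have d': "((\<lambda>t. f (t,y)) has_real_derivative extz \<Omega> fx (x,y)) (at x)"
    using d[OF True] True by (simp add: extz_def)
  show ?thesis
    by (rule has_field_derivative_transform_within_open[OF d' open_slice_x[OF assms(1)]])
       (use True in \<open>auto simp: extz_def\<close>)
next
  case False
  have "((\<lambda>t. 0::real) has_real_derivative extz \<Omega> fx (x,y)) (at x)" using False by (simp add: extz_def)
  moreover have "open {t. (t,y) \<in> - K}" using assms(2) by (intro open_slice_x) auto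
  ultimately show ?thesis
    by (rule has_field_derivative_transform_within_open[where S="{t. (t,y) \<in> - K}"])
       (use assms False in \<open>auto simp: extz_def\<close>)
qed

lemma extz_dy:
  assumes "open \<Omega>" "closed K" "K \<subseteq> \<Omega>" "\<And>q. q \<in> \<Omega> - K \<Longrightarrow> f q = 0" "\<And>q. q \<in> \<Omega> - K \<Longrightarrow> fy q = 0"
    and d: "\<And>x y. (x,y) \<in> \<Omega> \<Longrightarrow> ((\<lambda>t. f (x,t)) has_real_derivative fy (x,y)) (at y)"
  shows "((\<lambda>t. extz \<Omega> f (x,t)) has_real_derivative extz \<Omega> fy (x,y)) (at y)"
proof (cases "(x,y) \<in> \<Omega>")
  case True
  have d': "((\<lambda>t. f (x,t)) has_real_derivative extz \<Omega> fy (x,y)) (at y)"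
    using d[OF True] True by (simp add: extz_def)
  show ?thesis
    by (rule has_field_derivative_transform_within_open[OF d' open_slice_y[OF assms(1)]])
       (use True in \<open>auto simp: extz_def\<close>)
next
  case False
  have "((\<lambda>t. 0::real) has_real_derivative extz \<Omega> fy (x,y)) (at y)" using False by (simp add: extz_def)
  moreover have "open {t. (x,t) \<in> - K}" using assms(2) by (intro open_slice_y) auto
  ultimately show ?thesis
    by (rule has_field_derivative_transform_within_open[where S="{t. (x,t) \<in> - K}"])
       (use assms False in \<open>auto simp: extz_def\<close>)
qed


lemma rect_xy:
  assumes C2: "C2_on \<Omega> u" and R: "cbox (a1,a2) (b1,b2) \<subseteq> \<Omega>" and "a1 \<le> b1" "a2 \<le> b2"
  shows "integral (cbox (a1,a2) (b1,b2)) (py (px u)) = u (b1,b2) - u (a1,b2) - u (b1,a2) + u (a1,a2)"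
proof -
  have C1u: "C1_on \<Omega> u" and C1x: "C1_on \<Omega> (px u)" using C2 by (auto simp: C2_on_def)
  have cont: "continuous_on (cbox (a1,a2) (b1,b2)) (py (px u))"
    using C1x R by (auto simp: C1_on_def intro: continuous_on_subset)
  have mem: "\<And>x y. x \<in> {a1..b1} \<Longrightarrow> y \<in> {a2..b2} \<Longrightarrow> (x,y) \<in> \<Omega>"
    using R by (auto simp: cbox_Pair_eq)
  have "integral (cbox (a1,a2) (b1,b2)) (py (px u)) = integral (cbox a1 b1) (\<lambda>x. integral (cbox a2 b2) (\<lambda>y. py (px u) (x, y)))"
    by (rule integral_prod_continuous[OF cont])
  also have "\<dots> = integral (cbox a1 b1) (\<lambda>x. px u (x,b2) - px u (x,a2))"
  proof (rule integral_cong)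
    fix x assume x: "x \<in> cbox a1 b1"
    have "((\<lambda>y. py (px u) (x,y)) has_integral (px u (x,b2) - px u (x,a2))) {a2..b2}"
      by (rule ftc_real[OF \<open>a2 \<le> b2\<close>]) (use x mem in \<open>auto intro: C1_dy[OF C1x]\<close>)
    then show "integral (cbox a2 b2) (\<lambda>y. py (px u) (x,y)) = px u (x,b2) - px u (x,a2)"
      by (simp add: integral_unique)
  qed
  also have "\<dots> = (u (b1,b2) - u (a1,b2)) - (u (b1,a2) - u (a1,a2))"
  proof -
    have "((\<lambda>x. px u (x,b2)) has_integral (u (b1,b2) - u (a1,b2))) {a1..b1}"
      by (rule ftc_real[OF \<open>a1 \<le> b1\<close>, of "\<lambda>t. u (t,b2)"]) (use mem \<open>a2 \<le> b2\<close> in \<open>auto intro: C1_dx[OF C1u]\<close>)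
    moreover have "((\<lambda>x. px u (x,a2)) has_integral (u (b1,a2) - u (a1,a2))) {a1..b1}"
      by (rule ftc_real[OF \<open>a1 \<le> b1\<close>, of "\<lambda>t. u (t,a2)"]) (use mem \<open>a2 \<le> b2\<close> in \<open>auto intro: C1_dx[OF C1u]\<close>)
    ultimately have "((\<lambda>x. px u (x,b2) - px u (x,a2)) has_integral ((u (b1,b2) - u (a1,b2)) - (u (b1,a2) - u (a1,a2)))) {a1..b1}"
      by (rule has_integral_diff)
    then show ?thesis by (simp add: integral_unique)
  qed
  finally show ?thesis by simp
qed

lemma rect_yx:
  assumes C2: "C2_on \<Omega> u" and R: "cbox (a1,a2) (b1,b2) \<subseteq> \<Omega>" and "a1 \<le> b1" "a2 \<le> b2"
  shows "integral (cbox (a1,a2) (b1,b2)) (px (py u)) = u (b1,b2) - u (a1,b2) - u (b1,a2) + u (a1,a2)"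
proof -
  have C1u: "C1_on \<Omega> u" and C1y: "C1_on \<Omega> (py u)" using C2 by (auto simp: C2_on_def)
  have cont: "continuous_on (cbox (a1,a2) (b1,b2)) (px (py u))"
    using C1y R by (auto simp: C1_on_def intro: continuous_on_subset)
  have c2: "continuous_on (cbox (a1,a2) (b1,b2)) (\<lambda>(x,y). px (py u) (x,y))" using cont by simp
  have mem: "\<And>x y. x \<in> {a1..b1} \<Longrightarrow> y \<in> {a2..b2} \<Longrightarrow> (x,y) \<in> \<Omega>"
    using R by (auto simp: cbox_Pair_eq)
  have "integral (cbox (a1,a2) (b1,b2)) (px (py u)) = integral (cbox a1 b1) (\<lambda>x. integral (cbox a2 b2) (\<lambda>y. px (py u) (x, y)))"
    by (rule integral_prod_continuous[OF cont])
  also have "\<dots> = integral (cbox a2 b2) (\<lambda>y. integral (cbox a1 b1) (\<lambda>x. px (py u) (x,y)))"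
    using integral_swap_continuous[of a1 a2 b1 b2 "\<lambda>x y. px (py u) (x,y)"] c2 by simp
  also have "\<dots> = integral (cbox a2 b2) (\<lambda>y. py u (b1,y) - py u (a1,y))"
  proof (rule integral_cong)
    fix y assume y: "y \<in> cbox a2 b2"
    have "((\<lambda>x. px (py u) (x,y)) has_integral (py u (b1,y) - py u (a1,y))) {a1..b1}"
      by (rule ftc_real[OF \<open>a1 \<le> b1\<close>, of "\<lambda>t. py u (t,y)"]) (use y mem in \<open>auto intro: C1_dx[OF C1y]\<close>)
    then show "integral (cbox a1 b1) (\<lambda>x. px (py u) (x,y)) = py u (b1,y) - py u (a1,y)"
      by (simp add: integral_unique)
  qed
  also have "\<dots> = (u (b1,b2) - u (b1,a2)) - (u (a1,b2) - u (a1,a2))"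
  proof -
    have "((\<lambda>y. py u (b1,y)) has_integral (u (b1,b2) - u (b1,a2))) {a2..b2}"
      by (rule ftc_real[OF \<open>a2 \<le> b2\<close>, of "\<lambda>t. u (b1,t)"]) (use mem \<open>a1 \<le> b1\<close> in \<open>auto intro: C1_dy[OF C1u]\<close>)
    moreover have "((\<lambda>y. py u (a1,y)) has_integral (u (a1,b2) - u (a1,a2))) {a2..b2}"
      by (rule ftc_real[OF \<open>a2 \<le> b2\<close>, of "\<lambda>t. u (a1,t)"]) (use mem \<open>a1 \<le> b1\<close> in \<open>auto intro: C1_dy[OF C1u]\<close>)
    ultimately have "((\<lambda>y. py u (b1,y) - py u (a1,y)) has_integral ((u (b1,b2) - u (b1,a2)) - (u (a1,b2) - u (a1,a2)))) {a2..b2}"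
      by (rule has_integral_diff)
    then show ?thesis by (simp add: integral_unique)
  qed
  finally show ?thesis by simp
qed

lemma dist_sq_bound:
  fixes a b c e d :: real
  assumes "\<bar>a - c\<bar> \<le> d" "\<bar>b - e\<bar> \<le> d" "d > 0"
  shows "dist (a,b) (c,e) < 3 * d"
proof -
  have "dist (a,b) (c,e) = sqrt ((a-c)^2 + (b-e)^2)" by (simp add: dist_Pair_Pair dist_real_def)
  also have "\<dots> \<le> \<bar>a-c\<bar> + \<bar>b-e\<bar>" by (rule sqrt_sum_squares_le_sum_abs)
  finally show ?thesis using assms by linarith
qed


lemma schwarz:
  assumes op: "open \<Omega>" and C2: "C2_on \<Omega> u" and p: "p \<in> \<Omega>"
  shows "py (px u) p = px (py u) p"
proof (rule ccontr)
  assume ne: "py (px u) p \<noteq> px (py u) p"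
  define s where "s = py (px u) p - px (py u) p"
  define E where "E = (\<lambda>q. (py (px u) q - px (py u) q) * s)"
  have s0: "s \<noteq> 0" using ne by (simp add: s_def)
  have contE: "continuous_on \<Omega> E"
    using C2 unfolding E_def C2_on_def C1_on_def by (intro continuous_intros) auto
  have Ep: "E p > 0" using ne by (auto simp: E_def s_def zero_less_mult_iff)
  have "isCont E p" using contE op p continuous_on_eq_continuous_at by blast
  then obtain d0 where d0: "d0 > 0" "\<And>q. dist q p < d0 \<Longrightarrow> dist (E q) (E p) < E p"
    using Ep unfolding continuous_at_eps_delta by blast
  obtain e0 where e0: "e0 > 0" "ball p e0 \<subseteq> \<Omega>" using op p open_contains_ball by blast
  define d where "d = min d0 e0 / 3"
  have d: "d > 0" using d0 e0 by (simp add: d_def)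
  obtain p1 p2 where pp: "p = (p1,p2)" by (cases p)
  define R where "R = cbox (p1 - d, p2 - d) (p1 + d, p2 + d)"
  have inR: "\<And>q. q \<in> R \<Longrightarrow> dist q p < min d0 e0"
  proof -
    fix q assume "q \<in> R"
    then obtain q1 q2 where q: "q = (q1,q2)" "\<bar>q1 - p1\<bar> \<le> d" "\<bar>q2 - p2\<bar> \<le> d"
      by (cases q) (auto simp: R_def cbox_Pair_eq abs_le_iff)
    have "dist (q1,q2) (p1,p2) < 3 * d" by (rule dist_sq_bound) (use q d in auto)
    then show "dist q p < min d0 e0" using q pp by (simp add: d_def)
  qed
  have RO: "R \<subseteq> \<Omega>"
  proof
    fix q assume "q \<in> R"
    then have "dist p q < e0" using inR[of q] by (simp add: dist_commute)
    then show "q \<in> \<Omega>" using e0 by auto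
  qed
  have Epos: "\<And>q. q \<in> R \<Longrightarrow> E q \<ge> 0"
  proof -
    fix q assume "q \<in> R"
    then have "dist (E q) (E p) < E p" using inR[of q] d0 by auto
    then show "E q \<ge> 0" by (simp add: dist_real_def)
  qed
  have contR: "continuous_on R E" using contE RO continuous_on_subset by blast
  have ne_box: "box (p1 - d, p2 - d) (p1 + d, p2 + d) \<noteq> {}"
  proof -
    have "Henstock_Kurzweil_Integration.content (cbox (p1 - d, p2 - d) (p1 + d, p2 + d)) \<noteq> 0" using d by (simp add: content_Pair)
    then show ?thesis unfolding content_eq_0_interior by simp
  qed
  have pR: "p \<in> R" using d pp by (auto simp: R_def cbox_Pair_eq)
  have cxy: "continuous_on R (py (px u))" and cyx: "continuous_on R (px (py u))"
    using C2 RO unfolding C2_on_def C1_on_def by (auto intro: continuous_on_subset)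
  have "integral R E = (integral R (py (px u)) - integral R (px (py u))) * s"
    unfolding E_def
    using integrable_continuous[OF cxy[unfolded R_def]] integrable_continuous[OF cyx[unfolded R_def]]
    by (simp add: integral_mult_left integral_diff R_def)
  also have "\<dots> = 0"
    using rect_xy[OF C2 RO[unfolded R_def]] rect_yx[OF C2 RO[unfolded R_def]] d
    by (simp add: R_def)
  finally have "integral R E = 0" .
  then have "\<forall>q\<in>R. E q = 0"
    using integral_cbox_eq_0_iff[of "(p1 - d, p2 - d)" "(p1 + d, p2 + d)" E] contR ne_box Epos
    by (simp add: R_def)
  then show False using pR Ep by auto
qed



lemma dmul:
  assumes "(f has_real_derivative a) (at x)" "(g has_real_derivative b) (at x)"
  shows "((\<lambda>t. f t * g t) has_real_derivative a * g x + f x * b) (at x)"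
  using DERIV_mult[OF assms] by (simp add: mult.commute)

lemma main_le:
  fixes \<Omega> :: "(real \<times> real) set" and u v :: "real \<times> real \<Rightarrow> real"
  assumes op: "open \<Omega>" and bd: "bounded \<Omega>" and C2u: "C2_on \<Omega> u" and C2v: "C2_on \<Omega> v"
    and cu: "continuous_on (closure \<Omega>) u" and cv: "continuous_on (closure \<Omega>) v"
    and cross: "\<And>p. p \<in> \<Omega> \<Longrightarrow> (px u p - snd p) * (py v p + fst p) - (py u p + fst p) * (px v p - snd p) = 0"
    and fr: "\<forall>p \<in> frontier \<Omega>. u p = v p"
  shows "\<forall>p\<in>\<Omega>. v p \<le> u p"
proof (rule ccontr)
  assume "\<not> (\<forall>p\<in>\<Omega>. v p \<le> u p)"
  then obtain p0 where p0: "p0 \<in> \<Omega>" "v p0 > u p0" by force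
  define w where "w = (\<lambda>q. v q - u q)"
  define c where "c = w p0 / 2"
  have c0: "c > 0" using p0 by (simp add: c_def w_def)
  have C1u: "C1_on \<Omega> u" and C1v: "C1_on \<Omega> v" and C1ux: "C1_on \<Omega> (px u)" and C1uy: "C1_on \<Omega> (py u)"
    using C2u C2v by (auto simp: C2_on_def)
  have cw: "continuous_on (closure \<Omega>) w" unfolding w_def using cu cv by (intro continuous_intros)
  define K where "K = {q \<in> closure \<Omega>. c \<le> w q}"
  have Kc: "closed K" unfolding K_def
    by (rule continuous_on_closed_Collect_le) (use cw in \<open>auto intro: continuous_intros\<close>)
  have KO: "K \<subseteq> \<Omega>"
  proof
    fix q assume q: "q \<in> K"
    show "q \<in> \<Omega>"
    proof (rule ccontr)
      assume "q \<notin> \<Omega>"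
      then have "q \<in> frontier \<Omega>" using q op by (auto simp: K_def frontier_def interior_open)
      then have "w q = 0" using fr by (simp add: w_def)
      then show False using q c0 by (simp add: K_def)
    qed
  qed
  have OK: "\<And>q. q \<in> \<Omega> - K \<Longrightarrow> max (w q - c) 0 = 0"
    using closure_subset by (fastforce simp: K_def)
  define G where "G = (\<lambda>q. (max (w q - c) 0)^2)"
  define Gx where "Gx = (\<lambda>q. 2 * max (w q - c) 0 * (px v q - px u q))"
  define Gy where "Gy = (\<lambda>q. 2 * max (w q - c) 0 * (py v q - py u q))"
  have dGx: "((\<lambda>t. G (t,y)) has_real_derivative Gx (x,y)) (at x)" if xy: "(x,y) \<in> \<Omega>" for x y
  proof -
    have dw: "((\<lambda>t. v (t,y) - u (t,y)) has_real_derivative px v (x,y) - px u (x,y)) (at x)"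
      by (rule DERIV_diff[OF C1_dx[OF C1v xy] C1_dx[OF C1u xy]])
    have "((\<lambda>t. (\<lambda>s. (max (s - c) 0)^2) ((\<lambda>t. v (t,y) - u (t,y)) t)) has_real_derivative
       2 * max ((v (x,y) - u (x,y)) - c) 0 * (px v (x,y) - px u (x,y))) (at x)"
      by (rule DERIV_chain2[OF H_deriv dw])
    then show ?thesis by (simp add: G_def Gx_def w_def)
  qed
  have dGy: "((\<lambda>t. G (x,t)) has_real_derivative Gy (x,y)) (at y)" if xy: "(x,y) \<in> \<Omega>" for x y
  proof -
    have dw: "((\<lambda>t. v (x,t) - u (x,t)) has_real_derivative py v (x,y) - py u (x,y)) (at y)"
      by (rule DERIV_diff[OF C1_dy[OF C1v xy] C1_dy[OF C1u xy]])
    have "((\<lambda>t. (\<lambda>s. (max (s - c) 0)^2) ((\<lambda>t. v (x,t) - u (x,t)) t)) has_real_derivative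
       2 * max ((v (x,y) - u (x,y)) - c) 0 * (py v (x,y) - py u (x,y))) (at y)"
      by (rule DERIV_chain2[OF H_deriv dw])
    then show ?thesis by (simp add: G_def Gy_def w_def)
  qed
  have cuO: "continuous_on \<Omega> u" "continuous_on \<Omega> v"
    using cu cv closure_subset continuous_on_subset by blast+
  have contd: "continuous_on \<Omega> (px u)" "continuous_on \<Omega> (py u)" "continuous_on \<Omega> (px v)" "continuous_on \<Omega> (py v)"
     "continuous_on \<Omega> (px (py u))" "continuous_on \<Omega> (py (px u))"
    using C1u C1v C1ux C1uy by (auto simp: C1_on_def)
  have contG: "continuous_on \<Omega> G" unfolding G_def w_def using cuO by (intro continuous_intros)
  have contGx: "continuous_on \<Omega> Gx" unfolding Gx_def w_def using cuO contd by (intro continuous_intros)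
  have contGy: "continuous_on \<Omega> Gy" unfolding Gy_def w_def using cuO contd by (intro continuous_intros)
  have G0: "\<And>q. q \<in> \<Omega> - K \<Longrightarrow> G q = 0" "\<And>q. q \<in> \<Omega> - K \<Longrightarrow> Gx q = 0" "\<And>q. q \<in> \<Omega> - K \<Longrightarrow> Gy q = 0"
    using OK by (auto simp: G_def Gx_def Gy_def)
  define f1 where "f1 = (\<lambda>q. py u q * G q)"
  define f1x where "f1x = (\<lambda>q. px (py u) q * G q + py u q * Gx q)"
  define f2 where "f2 = (\<lambda>q. px u q * G q)"
  define f2y where "f2y = (\<lambda>q. py (px u) q * G q + px u q * Gy q)"
  define f3 where "f3 = (\<lambda>q. fst q * G q)"
  define f3x where "f3x = (\<lambda>q. G q + fst q * Gx q)"
  define f4 where "f4 = (\<lambda>q. snd q * G q)"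
  define f4y where "f4y = (\<lambda>q. G q + snd q * Gy q)"
  have d1: "((\<lambda>t. f1 (t,y)) has_real_derivative f1x (x,y)) (at x)" if xy: "(x,y) \<in> \<Omega>" for x y
    using dmul[OF C1_dx[OF C1uy xy] dGx[OF xy]] by (simp add: f1_def f1x_def)
  have d2: "((\<lambda>t. f2 (x,t)) has_real_derivative f2y (x,y)) (at y)" if xy: "(x,y) \<in> \<Omega>" for x y
    using dmul[OF C1_dy[OF C1ux xy] dGy[OF xy]] by (simp add: f2_def f2y_def)
  have d3: "((\<lambda>t. f3 (t,y)) has_real_derivative f3x (x,y)) (at x)" if xy: "(x,y) \<in> \<Omega>" for x y
    using dmul[OF DERIV_ident dGx[OF xy]] by (simp add: f3_def f3x_def)
  have d4: "((\<lambda>t. f4 (x,t)) has_real_derivative f4y (x,y)) (at y)" if xy: "(x,y) \<in> \<Omega>" for x y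
    using dmul[OF DERIV_ident dGy[OF xy]] by (simp add: f4_def f4y_def)
  have z: "\<And>q. q \<in> \<Omega> - K \<Longrightarrow> f1 q = 0 \<and> f1x q = 0 \<and> f2 q = 0 \<and> f2y q = 0 \<and> f3 q = 0 \<and> f3x q = 0 \<and> f4 q = 0 \<and> f4y q = 0"
    using G0 by (simp add: f1_def f1x_def f2_def f2y_def f3_def f3x_def f4_def f4y_def)
  have cf: "continuous_on \<Omega> f1x" "continuous_on \<Omega> f2y" "continuous_on \<Omega> f3x" "continuous_on \<Omega> f4y"
    unfolding f1x_def f2y_def f3x_def f4y_def using contd contG contGx contGy
    by (auto intro!: continuous_intros)
  obtain r where r: "r > 0" "\<And>q. q \<in> \<Omega> \<Longrightarrow> norm q \<le> r" using bd bounded_pos by blast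
  define a where "a = r + 1"
  have outx: "(a, y) \<notin> \<Omega> \<and> (-a, y) \<notin> \<Omega>" for y
  proof -
    have "norm (a,y) > r" "norm (-a,y) > r" using norm_fst_le[of a y] norm_fst_le[of "-a" y] r
      by (simp_all add: a_def)
    then show ?thesis using r(2) by force
  qed
  have outy: "(x, a) \<notin> \<Omega> \<and> (x, -a) \<notin> \<Omega>" for x
  proof -
    have "norm (x,a) > r" "norm (x,-a) > r" using norm_snd_le[of a x] norm_snd_le[of "-a" x] r
      by (simp_all add: a_def)
    then show ?thesis using r(2) by force
  qed
  have a0: "-a \<le> a" using r by (simp add: a_def)
  define B where "B = cbox (-a,-a) (a,a)"
  have I1: "integral B (extz \<Omega> f1x) = 0" unfolding B_def
    by (rule int_dx_zero[OF extz_cont_on[OF op Kc KO cf(1)] a0, where f="extz \<Omega> f1"])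
       (use z extz_dx[OF op Kc KO _ _ d1] outx in \<open>auto simp: extz_def\<close>)
  have I2: "integral B (extz \<Omega> f2y) = 0" unfolding B_def
    by (rule int_dy_zero[OF extz_cont_on[OF op Kc KO cf(2)] a0, where f="extz \<Omega> f2"])
       (use z extz_dy[OF op Kc KO _ _ d2] outy in \<open>auto simp: extz_def\<close>)
  have I3: "integral B (extz \<Omega> f3x) = 0" unfolding B_def
    by (rule int_dx_zero[OF extz_cont_on[OF op Kc KO cf(3)] a0, where f="extz \<Omega> f3"])
       (use z extz_dx[OF op Kc KO _ _ d3] outx in \<open>auto simp: extz_def\<close>)
  have I4: "integral B (extz \<Omega> f4y) = 0" unfolding B_def
    by (rule int_dy_zero[OF extz_cont_on[OF op Kc KO cf(4)] a0, where f="extz \<Omega> f4"])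
       (use z extz_dy[OF op Kc KO _ _ d4] outy in \<open>auto simp: extz_def\<close>)
  have pw: "extz \<Omega> f2y q - extz \<Omega> f1x q - extz \<Omega> f3x q - extz \<Omega> f4y q = -2 * extz \<Omega> G q" for q
  proof (cases "q \<in> \<Omega>")
    case True
    have sw: "py (px u) q = px (py u) q" by (rule schwarz[OF op C2u True])
    have "f2y q - f1x q - f3x q - f4y q = -2 * G q + 2 * max (w q - c) 0 *
        ((px u q - snd q) * (py v q + fst q) - (py u q + fst q) * (px v q - snd q))"
      unfolding f1x_def f2y_def f3x_def f4y_def Gx_def Gy_def using sw by (simp add: algebra_simps)
    then show ?thesis using cross[OF True] True by (simp add: extz_def)
  next
    case False
    then show ?thesis by (simp add: extz_def)
  qed
  have ig: "extz \<Omega> f1x integrable_on B" "extz \<Omega> f2y integrable_on B" "extz \<Omega> f3x integrable_on B"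
    "extz \<Omega> f4y integrable_on B"
    unfolding B_def using extz_cont_on[OF op Kc KO cf(1)] extz_cont_on[OF op Kc KO cf(2)]
      extz_cont_on[OF op Kc KO cf(3)] extz_cont_on[OF op Kc KO cf(4)] z
    by (auto intro!: integrable_continuous)
  have "integral B (\<lambda>q. extz \<Omega> f2y q - extz \<Omega> f1x q - extz \<Omega> f3x q - extz \<Omega> f4y q) = 0"
    using ig I1 I2 I3 I4 by (simp add: integral_diff integrable_diff)
  then have "integral B (\<lambda>q. -2 * extz \<Omega> G q) = 0" by (simp only: pw)
  then have IG: "integral B (extz \<Omega> G) = 0" by simp
  have cGB: "continuous_on B (extz \<Omega> G)" by (rule extz_cont_on[OF op Kc KO contG G0(1)])
  have ne_box: "box (-a,-a) (a,a) \<noteq> {}"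
  proof -
    have "Henstock_Kurzweil_Integration.content (cbox (-a,-a) (a,a)) \<noteq> 0" using r by (simp add: content_Pair a_def)
    then show ?thesis unfolding content_eq_0_interior by simp
  qed
  have "\<forall>q\<in>B. extz \<Omega> G q = 0"
    using integral_cbox_eq_0_iff[of "(-a,-a)" "(a,a)" "extz \<Omega> G"] cGB ne_box IG
    by (auto simp: B_def extz_def G_def)
  moreover have "p0 \<in> B"
  proof -
    obtain x0 y0 where pe: "p0 = (x0,y0)" by (cases p0)
    have "norm p0 \<le> r" using r p0 by blast
    then have "\<bar>x0\<bar> \<le> r" "\<bar>y0\<bar> \<le> r" using norm_fst_le[of x0 y0] norm_snd_le[of y0 x0] pe by auto
    then show ?thesis using pe by (auto simp: B_def cbox_Pair_eq a_def)
  qed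
  moreover have "extz \<Omega> G p0 > 0" using p0 c0 by (simp add: extz_def G_def c_def)
  ultimately show False by auto
qed


lemma cross_zero:
  fixes A1 A2 B1 B2 :: real
  assumes nA: "\<not> (A1 = 0 \<and> A2 = 0)" and nB: "\<not> (B1 = 0 \<and> B2 = 0)"
    and e1: "A1 / sqrt (A1^2 + A2^2) = B1 / sqrt (B1^2 + B2^2)"
    and e2: "A2 / sqrt (A1^2 + A2^2) = B2 / sqrt (B1^2 + B2^2)"
  shows "A1 * B2 - A2 * B1 = 0"
proof -
  have "A1^2 + A2^2 > 0" using nA by (simp add: sum_power2_gt_zero_iff)
  then have ra: "sqrt (A1^2 + A2^2) > 0" by simp
  have "B1^2 + B2^2 > 0" using nB by (simp add: sum_power2_gt_zero_iff)
  then have rb: "sqrt (B1^2 + B2^2) > 0" by simp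
  define ra' where "ra' = sqrt (A1^2 + A2^2)"
  define rb' where "rb' = sqrt (B1^2 + B2^2)"
  have ra0: "ra' \<noteq> 0" "rb' \<noteq> 0" using ra rb by (auto simp: ra'_def rb'_def)
  have "A1 / ra' = B1 / rb'" using e1 by (simp add: ra'_def rb'_def)
  then have f1: "A1 * rb' = B1 * ra'" using ra0 by (simp add: frac_eq_eq)
  have "A2 / ra' = B2 / rb'" using e2 by (simp add: ra'_def rb'_def)
  then have f2: "A2 * rb' = B2 * ra'" using ra0 by (simp add: frac_eq_eq)
  have "rb' * (A1 * B2 - A2 * B1) = (A1 * rb') * B2 - (A2 * rb') * B1" by (simp add: algebra_simps)
  also have "\<dots> = 0" using f1 f2 by (simp add: algebra_simps)
  finally show ?thesis using ra0(2) by simp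
qed

lemma cross_from_N:
  assumes "\<forall>p \<in> \<Omega> - (sing_set \<Omega> u \<union> sing_set \<Omega> v). Nfield u p = Nfield v p" and p: "p \<in> \<Omega>"
  shows "(px u p - snd p) * (py v p + fst p) - (py u p + fst p) * (px v p - snd p) = 0"
proof (cases "p \<in> sing_set \<Omega> u \<union> sing_set \<Omega> v")
  case True
  then show ?thesis by (auto simp: sing_set_def)
next
  case False
  then have nA: "\<not> (px u p - snd p = 0 \<and> py u p + fst p = 0)"
    and nB: "\<not> (px v p - snd p = 0 \<and> py v p + fst p = 0)" using p by (auto simp: sing_set_def)
  have "Nfield u p = Nfield v p" using assms False p by blast
  then have e1: "(px u p - snd p) / sqrt ((px u p - snd p)^2 + (py u p + fst p)^2) =
      (px v p - snd p) / sqrt ((px v p - snd p)^2 + (py v p + fst p)^2)"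
    and e2: "(py u p + fst p) / sqrt ((px u p - snd p)^2 + (py u p + fst p)^2) =
      (py v p + fst p) / sqrt ((px v p - snd p)^2 + (py v p + fst p)^2)"
    by (simp_all add: Nfield_def Let_def)
  show ?thesis using cross_zero[OF nA nB e1 e2] by simp
qed

theorem lemma5p3:
  fixes \<Omega> :: "(real \<times> real) set" and u v :: "real \<times> real \<Rightarrow> real"
  assumes "open \<Omega>" and "connected \<Omega>" and "bounded \<Omega>"
    and "C2_on \<Omega> u" and "C2_on \<Omega> v"
    and "continuous_on (closure \<Omega>) u" and "continuous_on (closure \<Omega>) v"
    and "\<forall>p \<in> \<Omega> - (sing_set \<Omega> u \<union> sing_set \<Omega> v). Nfield u p = Nfield v p"
    and "\<forall>p \<in> frontier \<Omega>. u p = v p"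
  shows "\<forall>p \<in> \<Omega>. u p = v p"
proof -
  have c1: "\<And>p. p \<in> \<Omega> \<Longrightarrow> (px u p - snd p) * (py v p + fst p) - (py u p + fst p) * (px v p - snd p) = 0"
    using cross_from_N[OF assms(8)] by blast
  have c2: "\<And>p. p \<in> \<Omega> \<Longrightarrow> (px v p - snd p) * (py u p + fst p) - (py v p + fst p) * (px u p - snd p) = 0"
  proof -
    fix p assume "p \<in> \<Omega>"
    from c1[OF this] show "(px v p - snd p) * (py u p + fst p) - (py v p + fst p) * (px u p - snd p) = 0"
      by (simp add: algebra_simps)
  qed
  have fr2: "\<forall>p \<in> frontier \<Omega>. v p = u p" using assms(9) by simp
  have l1: "\<forall>p\<in>\<Omega>. v p \<le> u p"
    by (rule main_le[OF assms(1,3,4,5,6,7) c1 assms(9)])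
  have l2: "\<forall>p\<in>\<Omega>. u p \<le> v p"
    by (rule main_le[OF assms(1,3,5,4,7,6) c2 fr2])
  show ?thesis using l1 l2 by (simp add: order_antisym)
qed

end
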